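(* Fix a history $h_t$ and let $(\hat{Y}_t, O, Z)$ be jointly distributed given $h_t$, with $\hat Y_t\in\mathcal V$ (finite), $O\in\{0,1\}$, $Z$ in a countable set. Assume (outcome-sufficiency) $Z$ is conditionally independent of $\hat{Y}_t$ given $(O, h_t)$, and let $z$ be a feedback value that is positively informative for success: $q_1(z,h_t) > q_0(z,h_t)$. Then for any two candidates $\hat{y}_t, \hat{y}'_t\in\mathcal V$ with positive probability given $h_t$ and with $p(\hat y_t;h_t),p(\hat y'_t;h_t)>0$, \[ r_t^{\mathrm{cf}}(\hat{y}_t; h_t) \ge r_t^{\mathrm{cf}}(\hat{y}'_t; h_t) \iff r_t^{z}(\hat{y}_t; h_t) \ge r_t^{z}(\hat{y}'_t; h_t). \]
   Context: Notation: $p(\hat{y}_t; h_t) := P(O = 1 \mid \hat{Y}_t = \hat{y}_t, h_t)$; $q_b(z, h_t) := P(Z = z \mid O = b, h_t)$ for $b\in\{0,1\}$ (assume $P(O=b\mid h_t)>0$). Interventional credit (in identified form): $r_t^{\mathrm{cf}}(\hat{y}_t; h_t) := \log P(O=1 \mid \hat{Y}_t=\hat{y}_t, h_t) - \log P(O=1\mid h_t)$; this equals the interventional quantity $\log P(O=1\mid \mathrm{do}(\hat Y_t=\hat y_t),h_t) - \log P(O=1\mid h_t)$ under consistency, sequential ignorability and positivity. Feedback-conditioned reward: $r_t^{z}(\hat{y}_t; h_t) := \log P(Z=z \mid \hat{Y}_t=\hat{y}_t, h_t) - \log P(Z=z\mid h_t)$ (which coincides with the self-distillation reward under posterior compatibility).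 Assume $P(Z=z\mid h_t)>0$ and $P(O=1\mid h_t)>0$. *)

theory Defs
  imports "HOL-Probability.Probability"
begin

text \<open>The history h_t is fixed; D is the joint distribution of (Y_t, O, Z) given h_t,
  as a discrete distribution on triples (y, o, z), with O = 1 encoded as True.\<close>

definition Pr :: "('v \<times> bool \<times> 'z) pmf \<Rightarrow> ('v \<times> bool \<times> 'z \<Rightarrow> bool) \<Rightarrow> real" where
  "Pr D E = measure_pmf.prob D {w. E w}"

definition cPr :: "('v \<times> bool \<times> 'z) pmf \<Rightarrow> ('v \<times> bool \<times> 'z \<Rightarrow> bool)
    \<Rightarrow> ('v \<times> bool \<times> 'z \<Rightarrow> bool) \<Rightarrow> real" where
  "cPr D E F = Pr D (\<lambda>w. E w \<and> F w) / Pr D F"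

definition outcome_sufficient :: "('v \<times> bool \<times> 'z) pmf \<Rightarrow> bool" where
  "outcome_sufficient D \<longleftrightarrow> (\<forall>y b z.
     Pr D (\<lambda>(y',ob,z'). y' = y \<and> ob = b \<and> z' = z) * Pr D (\<lambda>(_,ob,_). ob = b)
     = Pr D (\<lambda>(y',ob,_). y' = y \<and> ob = b) * Pr D (\<lambda>(_,ob,z'). ob = b \<and> z' = z))"

definition p_succ :: "('v \<times> bool \<times> 'z) pmf \<Rightarrow> 'v \<Rightarrow> real" where
  "p_succ D y = cPr D (\<lambda>(_,ob,_). ob) (\<lambda>(y',_,_). y' = y)"

definition q :: "('v \<times> bool \<times> 'z) pmf \<Rightarrow> bool \<Rightarrow> 'z \<Rightarrow> real" where
  "q D b z = cPr D (\<lambda>(_,_,z'). z' = z) (\<lambda>(_,ob,_). ob = b)"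

definition r_cf :: "('v \<times> bool \<times> 'z) pmf \<Rightarrow> 'v \<Rightarrow> real" where
  "r_cf D y = ln (p_succ D y) - ln (Pr D (\<lambda>(_,ob,_). ob))"

definition r_z :: "('v \<times> bool \<times> 'z) pmf \<Rightarrow> 'z \<Rightarrow> 'v \<Rightarrow> real" where
  "r_z D z y = ln (cPr D (\<lambda>(_,_,z'). z' = z) (\<lambda>(y',_,_). y' = y))
             - ln (Pr D (\<lambda>(_,_,z'). z' = z))"

end

theory Submission
  imports Defs
begin

lemma Pr_cong: "(\<And>w. E w = F w) \<Longrightarrow> Pr D E = Pr D F" by (simp add: Pr_def)

lemma Pr_split: "Pr D E = Pr D (\<lambda>w. E w \<and> P w) + Pr D (\<lambda>w. E w \<and> \<not> P w)"
proof -
  have "{w. E w} = {w. E w \<and> P w} \<union> {w. E w \<and> \<not> P w}" by auto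
  moreover have "measure_pmf.prob D ({w. E w \<and> P w} \<union> {w. E w \<and> \<not> P w})
     = measure_pmf.prob D {w. E w \<and> P w} + measure_pmf.prob D {w. E w \<and> \<not> P w}"
    by (rule measure_pmf.finite_measure_Union) auto
  ultimately show ?thesis unfolding Pr_def by simp
qed

lemma key:
  fixes D :: "('v \<times> bool \<times> 'z) pmf" and z :: 'z and y :: 'v
  assumes O1: "Pr D (\<lambda>(_,ob,_). ob) > 0"
    and O0: "Pr D (\<lambda>(_,ob,_). \<not> ob) > 0"
    and suff: "outcome_sufficient D"
    and PY: "Pr D (\<lambda>(v,_,_). v = y) > 0"
  shows "cPr D (\<lambda>(_,_,z'). z' = z) (\<lambda>(y',_,_). y' = y)
     = p_succ D y * q D True z + (1 - p_succ D y) * q D False z"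
proof -
  define A where "A b = Pr D (\<lambda>(v,ob,_). v = y \<and> ob = b)" for b
  define C where "C b = Pr D (\<lambda>(v,ob,z'). v = y \<and> ob = b \<and> z' = z)" for b
  define Ob where "Ob b = Pr D (\<lambda>(_,ob,_). ob = b)" for b
  define OZ where "OZ b = Pr D (\<lambda>(_,ob,z'). ob = b \<and> z' = z)" for b
  have "Ob True = Pr D (\<lambda>(_,ob,_). ob)" unfolding Ob_def by (rule Pr_cong) auto
  then have ObT: "Ob True > 0" using O1 by simp
  have "Ob False = Pr D (\<lambda>(_,ob,_). \<not> ob)" unfolding Ob_def by (rule Pr_cong) auto
  then have ObF: "Ob False > 0" using O0 by simp
  have qb: "q D b z = OZ b / Ob b" for b
    unfolding q_def cPr_def OZ_def Ob_def by (rule arg_cong2[where f="(/)"]; rule Pr_cong; auto)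
  have Cb: "C b * Ob b = A b * OZ b" for b
    unfolding C_def Ob_def A_def OZ_def
    by (rule suff[unfolded outcome_sufficient_def, rule_format, of y b z])
  have Cq: "C b = A b * q D b z" for b
  proof -
    have "Ob b > 0" using ObT ObF by (cases b) auto
    moreover have "OZ b = Ob b * q D b z" using qb[of b] \<open>Ob b > 0\<close> by simp
    ultimately have "C b * Ob b = (A b * q D b z) * Ob b" using Cb[of b] by (simp add: ac_simps)
    then show ?thesis using \<open>Ob b > 0\<close> by simp
  qed
  define PYv where "PYv = Pr D (\<lambda>(v,_,_). v = y)"
  have PYs: "PYv = A True + A False"
    unfolding PYv_def A_def
    apply (subst Pr_split[where P="\<lambda>(_,ob,_). ob"])
    apply (rule arg_cong2[where f="(+)"])
     apply (rule Pr_cong; auto)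
    apply (rule Pr_cong; auto)
    done
  have PYZ: "Pr D (\<lambda>w. (case w of (_,_,z') \<Rightarrow> z' = z) \<and> (case w of (y',_,_) \<Rightarrow> y' = y))
      = C True + C False"
    unfolding C_def
    apply (subst Pr_split[where P="\<lambda>(_,ob,_). ob"])
    apply (rule arg_cong2[where f="(+)"])
     apply (rule Pr_cong; clarsimp; blast)
    apply (rule Pr_cong; clarsimp; blast)
    done
  have ps: "p_succ D y = A True / PYv"
    unfolding p_succ_def cPr_def PYv_def A_def by (rule arg_cong2[where f="(/)"]; rule Pr_cong; auto)
  have "cPr D (\<lambda>(_,_,z'). z' = z) (\<lambda>(y',_,_). y' = y) = (C True + C False) / PYv"
    unfolding cPr_def PYv_def PYZ[symmetric]
    by (rule arg_cong2[where f="(/)"]; rule Pr_cong; auto)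
  also have "\<dots> = p_succ D y * q D True z + (1 - p_succ D y) * q D False z"
  proof -
    have pos: "PYv > 0" using PY unfolding PYv_def .
    have e: "1 - A True / PYv = A False / PYv" using PYs pos by (simp add: field_simps)
    show ?thesis unfolding ps e Cq by (simp add: add_divide_distrib)
  qed
  finally show ?thesis .
qed

theorem proposition2:
  fixes D :: "('v \<times> bool \<times> 'z::countable) pmf" and V :: "'v set"
    and z :: 'z and y y' :: 'v
  assumes "finite V"
    and "\<forall>w \<in> set_pmf D. fst w \<in> V"
    and "Pr D (\<lambda>(_,ob,_). ob) > 0"
    and "Pr D (\<lambda>(_,ob,_). \<not> ob) > 0"
    and "Pr D (\<lambda>(_,_,z'). z' = z) > 0"
    and "outcome_sufficient D"
    and "q D True z > q D False z"
    and "y \<in> V" and "y' \<in> V"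
    and "Pr D (\<lambda>(v,_,_). v = y) > 0" and "Pr D (\<lambda>(v,_,_). v = y') > 0"
    and "p_succ D y > 0" and "p_succ D y' > 0"
  shows "r_cf D y \<ge> r_cf D y' \<longleftrightarrow> r_z D z y \<ge> r_z D z y'"
proof -
  note k1 = key[OF assms(3,4,6,10)] and k2 = key[OF assms(3,4,6,11)]
  define a where "a = q D True z"
  define b where "b = q D False z"
  have b0: "b \<ge> 0" unfolding b_def q_def cPr_def Pr_def by simp
  have ab: "a > b" using assms(7) unfolding a_def b_def .
  define p where "p = p_succ D y"
  define p' where "p' = p_succ D y'"
  have p0: "p > 0" "p' > 0" using assms(12,13) unfolding p_def p'_def by auto
  have s1: "p * a + (1 - p) * b > 0"
  proof -
    have "p * a + (1 - p) * b = b + p * (a - b)" by (simp add: algebra_simps)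
    moreover have "p * (a - b) > 0" using p0 ab by simp
    ultimately show ?thesis using b0 by linarith
  qed
  have s2: "p' * a + (1 - p') * b > 0"
  proof -
    have "p' * a + (1 - p') * b = b + p' * (a - b)" by (simp add: algebra_simps)
    moreover have "p' * (a - b) > 0" using p0 ab by simp
    ultimately show ?thesis using b0 by linarith
  qed
  have e1: "r_cf D y \<ge> r_cf D y' \<longleftrightarrow> p \<ge> p'"
    unfolding r_cf_def p_def[symmetric] p'_def[symmetric] using p0 by simp
  have "r_z D z y \<ge> r_z D z y' \<longleftrightarrow> p * a + (1 - p) * b \<ge> p' * a + (1 - p') * b"
    unfolding r_z_def k1 k2 a_def[symmetric] b_def[symmetric] p_def[symmetric] p'_def[symmetric]
    using s1 s2 by simp
  also have "\<dots> \<longleftrightarrow> p \<ge> p'"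
  proof -
    have "p * a + (1 - p) * b - (p' * a + (1 - p') * b) = (p - p') * (a - b)"
      by (simp add: algebra_simps)
    moreover have "(p - p') * (a - b) \<ge> 0 \<longleftrightarrow> p \<ge> p'" using ab
      by (simp add: zero_le_mult_iff)
    ultimately show ?thesis by linarith
  qed
  finally show ?thesis using e1 by simp
qed

end
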